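(* Let $n\ge4$ be even and let $\mathcal{S}_n$ be the regular $n$-gon state space. Then every pair of compatible dichotomic measurements $\mathsf{M}^{(1)},\mathsf{M}^{(2)}$ on $\mathcal{S}_n$ satisfies $\bar P(\mathsf{M}^{(1)},\mathsf{M}^{(2)})\le\frac34$, and there is a compatible pair attaining $\frac34$.
   Context: The regular $n$-gon state space $\mathcal{S}_n\subset\mathbb{R}^3$ is the convex hull of $s_j=(r_n\cos(2j\pi/n),\,r_n\sin(2j\pi/n),\,1)^T$, $j=1,\ldots,n$, with $r_n=\sqrt{\sec(\pi/n)}$. Effects are linear functionals $e$ on $\mathbb{R}^3$ with $0\le e\le1$ on $\mathcal{S}_n$; unit effect $u=(0,0,1)$; $\|f\|=\max_{s\in\mathcal{S}_n}|f(s)|$. A dichotomic measurement is a pair of effects $\mathsf{M}_+,\mathsf{M}_-$ with $\mathsf{M}_++\mathsf{M}_-=u$. Two dichotomic measurements are compatible if there exist effects $\mathsf{J}_{x,y}$, $x,y\in\{+,-\}$, summing to $u$ with $\sum_y\mathsf{J}_{x,y}=\mathsf{M}^{(1)}_x$ and $\sum_x\mathsf{J}_{x,y}=\mathsf{M}^{(2)}_y$. $\bar P(\mathsf{M}^{(1)},\mathsf{M}^{(2)})=\frac18\sum_{x,y\in\{+,-\}}\|\mathsf{M}^{(1)}_x+\mathsf{M}^{(2)}_y\|$. *)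

theory Defs
  imports "HOL-Analysis.Analysis"
begin

text \<open>Regular n-gon state space in R^3. Linear functionals on R^3 are represented
  by vectors f, acting as s \<mapsto> f \<bullet> s.\<close>

definition r_poly :: "nat \<Rightarrow> real" where
  "r_poly n = sqrt (1 / cos (pi / real n))"

definition vertex :: "nat \<Rightarrow> nat \<Rightarrow> real^3" where
  "vertex n j = vector [r_poly n * cos (2 * real j * pi / real n),
                        r_poly n * sin (2 * real j * pi / real n), 1]"

definition state_space :: "nat \<Rightarrow> (real^3) set" where
  "state_space n = convex hull {vertex n j | j. j \<in> {1..n}}"

definition unit_effect :: "real^3" where
  "unit_effect = vector [0, 0, 1]"

definition is_effect :: "nat \<Rightarrow> real^3 \<Rightarrow> bool" where
  "is_effect n e \<longleftrightarrow> (\<forall>s\<in>state_space n. 0 \<le> e \<bullet> s \<and> e \<bullet> s \<le> 1)"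

definition fnorm :: "nat \<Rightarrow> real^3 \<Rightarrow> real" where
  "fnorm n f = (SUP s\<in>state_space n. \<bar>f \<bullet> s\<bar>)"

text \<open>A dichotomic measurement: outcomes True (= +) and False (= -).\<close>
definition dichotomic :: "nat \<Rightarrow> (bool \<Rightarrow> real^3) \<Rightarrow> bool" where
  "dichotomic n M \<longleftrightarrow> is_effect n (M True) \<and> is_effect n (M False)
                        \<and> M True + M False = unit_effect"

definition compatible :: "nat \<Rightarrow> (bool \<Rightarrow> real^3) \<Rightarrow> (bool \<Rightarrow> real^3) \<Rightarrow> bool" where
  "compatible n M1 M2 \<longleftrightarrow> (\<exists>J :: bool \<Rightarrow> bool \<Rightarrow> real^3.
      (\<forall>x y. is_effect n (J x y)) \<and>
      (\<Sum>x\<in>UNIV. \<Sum>y\<in>UNIV. J x y) = unit_effect \<and>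
      (\<forall>x. (\<Sum>y\<in>UNIV. J x y) = M1 x) \<and>
      (\<forall>y. (\<Sum>x\<in>UNIV. J x y) = M2 y))"

definition Pbar :: "nat \<Rightarrow> (bool \<Rightarrow> real^3) \<Rightarrow> (bool \<Rightarrow> real^3) \<Rightarrow> real" where
  "Pbar n M1 M2 = (1/8) * (\<Sum>x\<in>UNIV. \<Sum>y\<in>UNIV. fnorm n (M1 x + M2 y))"

end

theory Submission
  imports Defs
begin

lemma inner3: "(vector [a,b,c] :: real^3) \<bullet> vector [x,y,z] = a*x+b*y+c*z"
  by (simp add: inner_vec_def sum_3)

lemma vert_in: "j \<in> {1..n} \<Longrightarrow> vertex n j \<in> state_space n"
  unfolding state_space_def by (rule hull_inc) blast

lemma hull_sub:
  assumes "convex T" "\<And>j. j \<in> {1..n} \<Longrightarrow> vertex n j \<in> T"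
  shows "state_space n \<subseteq> T"
  unfolding state_space_def using assms by (intro hull_minimal) auto

lemma unit_state: "s \<in> state_space n \<Longrightarrow> unit_effect \<bullet> s = 1"
proof -
  have "state_space n \<subseteq> {v. unit_effect \<bullet> v = 1}"
    by (rule hull_sub) (auto simp: convex_hyperplane vertex_def unit_effect_def inner3)
  then show "s \<in> state_space n \<Longrightarrow> unit_effect \<bullet> s = 1" by auto
qed

lemma sym_vertex:
  assumes "even n" "n \<ge> 4" "j \<in> {1..n}"
  shows "2 *\<^sub>R unit_effect - vertex n j \<in> state_space n"
proof -
  obtain m where m: "n = 2*m" using assms by auto
  have npos: "real n > 0" using assms by auto
  define k where "k = (if j \<le> m then j + m else j - m)"
  have k: "k \<in> {1..n}" using assms m unfolding k_def by auto
  have ang: "2 * real k * pi / real n = 2 * real j * pi / real n + pi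
           \<or> 2 * real k * pi / real n = 2 * real j * pi / real n - pi"
  proof (cases "j \<le> m")
    case True
    then have "real k = real j + real m" unfolding k_def by simp
    then have "2 * real k * pi / real n = 2 * real j * pi / real n + pi"
      using m npos by (simp add: field_simps)
    then show ?thesis by simp
  next
    case False
    then have "real k = real j - real m" unfolding k_def using False by simp
    then have "2 * real k * pi / real n = 2 * real j * pi / real n - pi"
      using m npos by (simp add: field_simps) (metis distrib_left)
    then show ?thesis by simp
  qed
  have c: "cos (2 * real k * pi / real n) = - cos (2 * real j * pi / real n)"
   and s: "sin (2 * real k * pi / real n) = - sin (2 * real j * pi / real n)"
    using ang by (auto simp: cos_diff sin_diff)
  have "2 *\<^sub>R unit_effect - vertex n j = vertex n k"
    unfolding vertex_def unit_effect_def using c s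
    by (simp add: vec_eq_iff forall_3)
  then show ?thesis using vert_in[OF k] by simp
qed

lemma sym_state:
  assumes "even n" "n \<ge> 4" "s \<in> state_space n"
  shows "2 *\<^sub>R unit_effect - s \<in> state_space n"
proof -
  have cv: "convex (state_space n)" unfolding state_space_def by simp
  have "convex {s. 2 *\<^sub>R unit_effect - s \<in> state_space n}"
    unfolding convex_def
  proof (intro allI impI ballI, simp)
    fix x y :: "real^3" and u v :: real
    assume h: "2 *\<^sub>R unit_effect - x \<in> state_space n" "2 *\<^sub>R unit_effect - y \<in> state_space n"
      "0 \<le> u" "0 \<le> v" "u + v = 1"
    have "2 *\<^sub>R unit_effect - (u *\<^sub>R x + v *\<^sub>R y)
        = u *\<^sub>R (2 *\<^sub>R unit_effect - x) + v *\<^sub>R (2 *\<^sub>R unit_effect - y)"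
      using h(5) by (simp add: algebra_simps flip: scaleR_add_left)
    then show "2 *\<^sub>R unit_effect - (u *\<^sub>R x + v *\<^sub>R y) \<in> state_space n"
      using cv h by (simp add: convex_def)
  qed
  then have "state_space n \<subseteq> {s. 2 *\<^sub>R unit_effect - s \<in> state_space n}"
    using sym_vertex[OF assms(1,2)] by (intro hull_sub) auto
  then show ?thesis using assms(3) by auto
qed

lemma eff_le:
  assumes "even n" "n \<ge> 4" "is_effect n X" "s \<in> state_space n"
  shows "X \<bullet> s \<le> 2 * (X \<bullet> unit_effect)"
proof -
  have "0 \<le> X \<bullet> (2 *\<^sub>R unit_effect - s)"
    using assms sym_state[OF assms(1,2,4)] unfolding is_effect_def by blast
  then show ?thesis by (simp add: inner_diff_right)
qed

lemma ss_ne: "n \<ge> 1 \<Longrightarrow> state_space n \<noteq> {}"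
  using vert_in[of 1 n] by auto

lemma sup_pair:
  fixes g h :: "real^3 \<Rightarrow> real"
  assumes ne: "S \<noteq> {}" and K: "\<And>s t. s \<in> S \<Longrightarrow> t \<in> S \<Longrightarrow> g s + h t \<le> K"
  shows "(SUP s\<in>S. g s) + (SUP s\<in>S. h s) \<le> K"
proof -
  have "\<And>t. t \<in> S \<Longrightarrow> (SUP s\<in>S. g s) \<le> K - h t"
    using K ne by (intro cSUP_least) (auto simp: algebra_simps)
  then have "\<And>t. t \<in> S \<Longrightarrow> h t \<le> K - (SUP s\<in>S. g s)" by fastforce
  then have "(SUP s\<in>S. h s) \<le> K - (SUP s\<in>S. g s)"
    using ne by (intro cSUP_least) auto
  then show ?thesis by simp
qed

lemma UNIV_bool_sum: "(\<Sum>x\<in>(UNIV::bool set). f x) = f True + f False"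
  by (simp add: UNIV_bool add.commute)

lemma upper:
  assumes n: "even n" "n \<ge> 4" and c: "compatible n M1 M2"
  shows "Pbar n M1 M2 \<le> 3/4"
proof -
  obtain J where Je: "\<And>x y. is_effect n (J x y)"
    and Js: "(\<Sum>x\<in>UNIV. \<Sum>y\<in>UNIV. J x y) = unit_effect"
    and J1: "\<And>x. (\<Sum>y\<in>UNIV. J x y) = M1 x"
    and J2: "\<And>y. (\<Sum>x\<in>UNIV. J x y) = M2 y"
    using c unfolding compatible_def by blast
  let ?S = "state_space n"
  have ne: "?S \<noteq> {}" using ss_ne n by auto
  have sumJ: "J True True + J True False + J False True + J False False = unit_effect"
    using Js by (simp add: UNIV_bool_sum algebra_simps)
  have Msum: "M1 x + M2 y = unit_effect + J x y - J (\<not>x) (\<not>y)" for x y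
    using sumJ unfolding J1[symmetric] J2[symmetric]
    by (cases x; cases y) (auto simp: UNIV_bool_sum algebra_simps)
  define a where "a x y = J x y \<bullet> unit_effect" for x y
  have asum: "a True True + a True False + a False True + a False False = 1"
    unfolding a_def using sumJ
    by (simp add: unit_effect_def inner3 flip: inner_add_left)
  have val: "(M1 x + M2 y) \<bullet> s = 1 + J x y \<bullet> s - J (\<not>x) (\<not>y) \<bullet> s" if "s \<in> ?S" for x y s
    using unit_state[OF that] by (simp add: Msum inner_diff_left inner_add_left)
  have abs_val: "\<bar>(M1 x + M2 y) \<bullet> s\<bar> = 1 + J x y \<bullet> s - J (\<not>x) (\<not>y) \<bullet> s" if "s \<in> ?S" for x y s
    using val[OF that] Je[of x y] Je[of "\<not>x" "\<not>y"] that unfolding is_effect_def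
    by fastforce
  have pair: "fnorm n (M1 x + M2 y) + fnorm n (M1 (\<not>x) + M2 (\<not>y)) \<le> 2 + 2*(a x y + a (\<not>x) (\<not>y))" for x y
    unfolding fnorm_def
  proof (rule sup_pair[OF ne])
    fix s t assume st: "s \<in> ?S" "t \<in> ?S"
    have "J x y \<bullet> s \<le> 2 * a x y" "J (\<not>x) (\<not>y) \<bullet> t \<le> 2 * a (\<not>x) (\<not>y)"
      using eff_le[OF n Je st(1)] eff_le[OF n Je st(2)] unfolding a_def by auto
    moreover have "0 \<le> J x y \<bullet> t" "0 \<le> J (\<not>x) (\<not>y) \<bullet> s"
      using Je st unfolding is_effect_def by auto
    ultimately show "\<bar>(M1 x + M2 y) \<bullet> s\<bar> + \<bar>(M1 (\<not>x) + M2 (\<not>y)) \<bullet> t\<bar> \<le> 2 + 2*(a x y + a (\<not>x) (\<not>y))"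
      using abs_val[OF st(1), of x y] abs_val[OF st(2), of "\<not>x" "\<not>y"] by simp
  qed
  have "Pbar n M1 M2 = (1/8) * ((fnorm n (M1 True + M2 True) + fnorm n (M1 False + M2 False))
      + (fnorm n (M1 True + M2 False) + fnorm n (M1 False + M2 True)))"
    unfolding Pbar_def by (simp add: UNIV_bool_sum algebra_simps)
  also have "\<dots> \<le> (1/8) * ((2 + 2*(a True True + a False False)) + (2 + 2*(a True False + a False True)))"
    using pair[of True True] pair[of True False] by simp
  also have "\<dots> = 3/4" using asum by simp
  finally show ?thesis .
qed


lemma fnorm_eq:
  assumes "\<And>s. s \<in> state_space n \<Longrightarrow> \<bar>f \<bullet> s\<bar> \<le> K" "s0 \<in> state_space n" "\<bar>f \<bullet> s0\<bar> = K"
  shows "fnorm n f = K"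
proof -
  have bdd: "bdd_above ((\<lambda>s. \<bar>f \<bullet> s\<bar>) ` state_space n)"
    using assms(1) by (intro bdd_aboveI2) auto
  have "fnorm n f \<le> K" unfolding fnorm_def using assms by (intro cSUP_least) auto
  moreover have "K \<le> fnorm n f" unfolding fnorm_def using assms bdd
    by (intro cSUP_upper2[of _ _ s0]) auto
  ultimately show ?thesis by simp
qed

lemma lower:
  assumes n: "even n" "n \<ge> 4"
  shows "\<exists>M1 M2. dichotomic n M1 \<and> dichotomic n M2 \<and> compatible n M1 M2
            \<and> Pbar n M1 M2 = 3/4"
proof -
  define r where "r = r_poly n"
  have "cos (pi / real n) > 0"
  proof -
    have p: "pi / real n > 0" using n pi_gt_zero by auto
    have "pi / real n \<le> pi / 4" using n pi_gt_zero by (intro divide_left_mono) auto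
    then have "pi / real n < pi / 2" using pi_gt_zero by linarith
    then show ?thesis using p pi_gt_zero by (intro cos_gt_zero_pi) linarith+
  qed
  then have rpos: "r > 0" unfolding r_def r_poly_def by simp
  define e :: "real^3" where "e = vector [1/(2*r), 0, 1/2]"
  have ev: "e \<bullet> vertex n j = 1/2 + cos (2 * real j * pi / real n) / 2" for j
    unfolding e_def vertex_def r_def[symmetric] using rpos by (simp add: inner3)
  have ue: "unit_effect \<bullet> s = 1" if "s \<in> state_space n" for s using unit_state[OF that] .
  have "state_space n \<subseteq> {v. 0 \<le> e \<bullet> v} \<inter> {v. e \<bullet> v \<le> 1}"
  proof (rule hull_sub)
    show "convex ({v. 0 \<le> e \<bullet> v} \<inter> {v. e \<bullet> v \<le> 1})"
      by (intro convex_Int convex_halfspace_le convex_halfspace_ge)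
  next
    fix j
    have "0 \<le> e \<bullet> vertex n j" "e \<bullet> vertex n j \<le> 1" unfolding ev
      using cos_le_one[of "2 * real j * pi / real n"] cos_ge_minus_one[of "2 * real j * pi / real n"]
      by linarith+
    then show "vertex n j \<in> {v. 0 \<le> e \<bullet> v} \<inter> {v. e \<bullet> v \<le> 1}" by simp
  qed
  then have eb: "0 \<le> e \<bullet> s" "e \<bullet> s \<le> 1" if "s \<in> state_space n" for s using that by auto
  define M where "M = (\<lambda>b::bool. if b then e else unit_effect - e)"
  have eff: "is_effect n e" "is_effect n (unit_effect - e)" "is_effect n 0"
    unfolding is_effect_def using eb ue by (auto simp: inner_diff_left)
  have dM: "dichotomic n M" unfolding dichotomic_def M_def using eff by simp
  have cM: "compatible n M M" unfolding compatible_def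
    apply (rule exI[of _ "\<lambda>x y. if x = y then M x else 0"])
    using eff by (auto simp: UNIV_bool_sum M_def)
  have nin: "n \<in> {1..n}" "n div 2 \<in> {1..n}" using n by auto
  have cn: "cos (2 * real n * pi / real n) = 1" using n by simp
  have ch: "cos (2 * real (n div 2) * pi / real n) = -1"
  proof -
    have "2 * real (n div 2) = real n" 
    proof -
      have "2 * (n div 2) = n" using n by simp
      then show ?thesis by (metis of_nat_mult of_nat_numeral)
    qed
    then have "2 * real (n div 2) * pi / real n = pi" using n by simp
    then show ?thesis by simp
  qed
  have i1: "(e + e) \<bullet> s = 2 * (e \<bullet> s)" for s by (simp only: inner_add_left mult_2)
  have i2: "((unit_effect - e) + (unit_effect - e)) \<bullet> s = 2 * (unit_effect \<bullet> s - e \<bullet> s)" for s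
    by (simp only: inner_add_left inner_diff_left mult_2)
  have i3: "(e + (unit_effect - e)) \<bullet> s = unit_effect \<bullet> s" "((unit_effect - e) + e) \<bullet> s = unit_effect \<bullet> s" for s
    by (simp_all only: inner_add_left inner_diff_left diff_add_cancel add_diff_cancel_left')
  have vn: "e \<bullet> vertex n n = 1" unfolding ev cn by simp
  have vh: "e \<bullet> vertex n (n div 2) = 0" unfolding ev ch by simp
  have f1: "fnorm n (e + e) = 2"
  proof (rule fnorm_eq[OF _ vert_in[OF nin(1)]])
    fix s assume "s \<in> state_space n" then show "\<bar>(e + e) \<bullet> s\<bar> \<le> 2" unfolding i1 using eb by auto
  next show "\<bar>(e + e) \<bullet> vertex n n\<bar> = 2" unfolding i1 vn by simp
  qed
  have f2: "fnorm n ((unit_effect - e) + (unit_effect - e)) = 2"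
  proof (rule fnorm_eq[OF _ vert_in[OF nin(2)]])
    fix s assume "s \<in> state_space n" then show "\<bar>((unit_effect - e) + (unit_effect - e)) \<bullet> s\<bar> \<le> 2"
      unfolding i2 using eb ue by auto
  next show "\<bar>((unit_effect - e) + (unit_effect - e)) \<bullet> vertex n (n div 2)\<bar> = 2"
      unfolding i2 vh ue[OF vert_in[OF nin(2)]] by simp
  qed
  have f3: "fnorm n (e + (unit_effect - e)) = 1" "fnorm n ((unit_effect - e) + e) = 1"
  proof -
    have "fnorm n unit_effect = 1"
      by (rule fnorm_eq[OF _ vert_in[OF nin(1)]]) (use ue vert_in[OF nin(1)] in auto)
    then show "fnorm n (e + (unit_effect - e)) = 1" "fnorm n ((unit_effect - e) + e) = 1" by simp_all
  qed
  have "Pbar n M M = 3/4"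
    unfolding Pbar_def M_def UNIV_bool_sum if_True if_False f1 f2 f3 by simp
  then show ?thesis using dM cM by blast
qed

theorem mainTheorem12:
  fixes n :: nat
  assumes "n \<ge> 4" and "even n"
  shows "(\<forall>M1 M2. dichotomic n M1 \<and> dichotomic n M2 \<and> compatible n M1 M2
            \<longrightarrow> Pbar n M1 M2 \<le> 3/4)
       \<and> (\<exists>M1 M2. dichotomic n M1 \<and> dichotomic n M2 \<and> compatible n M1 M2
            \<and> Pbar n M1 M2 = 3/4)"
  using upper[OF assms(2,1)] lower[OF assms(2,1)] by blast

end
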